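(* The entropy-distortion function of the sawbridge satisfies $$\lim_{\Delta\to 0^+}\left| H(\Delta) - \log\frac{1}{6\Delta}\right| = 0.$$
   Context: Let $U$ be uniformly distributed on $[0,1]$. The sawbridge is the random process $X(t) = t - \mathbf{1}(t\ge U)$, $t\in[0,1]$, viewed as a random element of $L^2[0,1]$. An encoder is a (measurable) map $f:L^2[0,1]\to\mathbb{N}$, with entropy $H(f) = -\sum_{i} P(f(X)=i)\log P(f(X)=i)$ and distortion $D(f) = E\big[\int_0^1 (X(t)-E[X(t)\mid f(X)])^2\,dt\big]$. Logarithms are base 2. The entropy-distortion function is $H(\Delta) = \inf\{H(f): D(f)\le\Delta\}$. *)

theory Defs
  imports "HOL-Analysis.Analysis"
begin

text \<open>Sample path of the sawbridge for the value U = u: X(t) = t - 1(t \<ge> u).\<close>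
definition saw :: "real \<Rightarrow> real \<Rightarrow> real" where
  "saw u t = t - (if t \<ge> u then 1 else 0)"

text \<open>An encoder maps sample paths to natural numbers; it must be measurable
  as a function of the sawbridge, i.e. u \<mapsto> f (saw u) is Borel measurable on [0,1]
  (U uniform on [0,1]).\<close>
definition encoder :: "((real \<Rightarrow> real) \<Rightarrow> nat) \<Rightarrow> bool" where
  "encoder f \<longleftrightarrow>
     (\<lambda>u. f (saw u)) \<in> measurable (restrict_space borel {0..1}) (count_space UNIV)"

text \<open>P(f(X) = i), with U uniform on [0,1].\<close>
definition cell_prob :: "((real \<Rightarrow> real) \<Rightarrow> nat) \<Rightarrow> nat \<Rightarrow> real" where
  "cell_prob f i = measure lborel {u \<in> {0..1}. f (saw u) = i}"

text \<open>E[X(t) | f(X) = i] (irrelevant on null cells).\<close>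
definition cond_mean :: "((real \<Rightarrow> real) \<Rightarrow> nat) \<Rightarrow> nat \<Rightarrow> real \<Rightarrow> real" where
  "cond_mean f i t =
     (LINT u : {u \<in> {0..1}. f (saw u) = i} | lborel. saw u t) / cell_prob f i"

definition entropy :: "((real \<Rightarrow> real) \<Rightarrow> nat) \<Rightarrow> ereal" where
  "entropy f = (\<Sum>i. ereal (if cell_prob f i = 0 then 0
                              else - cell_prob f i * log 2 (cell_prob f i)))"

definition distortion :: "((real \<Rightarrow> real) \<Rightarrow> nat) \<Rightarrow> real" where
  "distortion f =
     (LINT u : {0..1} | lborel.
        (LINT t : {0..1} | lborel. (saw u t - cond_mean f (f (saw u)) t)\<^sup>2))"

definition entropy_distortion :: "real \<Rightarrow> ereal" where
  "entropy_distortion \<Delta> = (INF f \<in> {f. encoder f \<and> distortion f \<le> \<Delta>}. entropy f)"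

end

theory Submission
  imports Defs
begin


lemma Ioc_fm: "{s<..t::real} \<in> fmeasurable lborel" by (cases "s \<le> t") (auto simp: fmeasurable_def)
lemma Icc_fm: "{s..t::real} \<in> fmeasurable lborel" by (cases "s \<le> t") (auto simp: fmeasurable_def)

lemma pred_le_fst_snd[measurable]: "Measurable.pred (borel \<Otimes>\<^sub>M borel) (\<lambda>x::real\<times>real. fst x \<in> {..snd x})"
  unfolding atMost_iff by measurable

definition GG :: "real set \<Rightarrow> real \<Rightarrow> real" where
  "GG A t = measure lborel (A \<inter> {..t})"

locale cellA =
  fixes A :: "real set"
  assumes A_sets: "A \<in> sets borel" and A_sub: "A \<subseteq> {0..1}"
begin

lemma A_fin: "emeasure lborel A < \<infinity>"
proof -
  have "emeasure lborel A \<le> emeasure lborel {0..1::real}"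
    using A_sub by (intro emeasure_mono) auto
  also have "\<dots> = 1" by simp
  finally show ?thesis by (simp add: order_le_less_trans)
qed

lemma A_fm: "A \<in> fmeasurable lborel"
  using A_fin A_sets by (intro fmeasurableI) auto

lemma AS_fm: "S \<in> sets borel \<Longrightarrow> A \<inter> S \<in> fmeasurable lborel"
  using A_fm by (intro fmeasurable_Int_fmeasurable) auto

lemma GG_diff: "s \<le> t \<Longrightarrow> GG A t - GG A s = measure lborel (A \<inter> {s<..t})"
proof -
  assume st: "s \<le> t"
  have "A \<inter> {..t} = (A \<inter> {..s}) \<union> (A \<inter> {s<..t})" using st by auto
  hence "GG A t = GG A s + measure lborel (A \<inter> {s<..t})"
    unfolding GG_def
    by (subst measure_Union[symmetric]) (use AS_fm[of "{..s}"] AS_fm[of "{s<..t}"] in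
        \<open>auto simp: fmeasurable_def\<close>)
  thus ?thesis by simp
qed

lemma GG_inc: "s \<le> t \<Longrightarrow> GG A t - GG A s \<le> t - s"
proof -
  assume st: "s \<le> t"
  have "measure lborel (A \<inter> {s<..t}) \<le> measure lborel {s<..t}"
    using A_sets by (intro measure_mono_fmeasurable) (auto simp: Ioc_fm)
  thus ?thesis using st GG_diff by simp
qed

lemma GG_mono: "s \<le> t \<Longrightarrow> GG A s \<le> GG A t"
  using GG_diff[of s t] measure_nonneg[of lborel "A \<inter> {s<..t}"] by linarith

lemma GG_lip: "dist (GG A s) (GG A t) \<le> 1 * dist s t"
proof (cases "s \<le> t")
  case True thus ?thesis using GG_inc[of s t] GG_mono[of s t] by (simp add: dist_real_def)
next
  case False thus ?thesis using GG_inc[of t s] GG_mono[of t s] by (simp add: dist_real_def)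
qed

lemma GG_cont: "continuous_on S (GG A)"
  by (rule lipschitz_on_continuous_on[of 1]) (use GG_lip in \<open>auto simp: lipschitz_on_def\<close>)

lemma GG_meas[measurable]: "GG A \<in> borel_measurable borel"
  using GG_cont[of UNIV] by (simp add: borel_measurable_continuous_onI)

lemma GG_nonpos: "t \<le> 0 \<Longrightarrow> GG A t = 0"
proof -
  assume t: "t \<le> 0"
  have "measure lborel (A \<inter> {..t}) \<le> measure lborel {0::real}"
    using A_sub A_sets t by (intro measure_mono_fmeasurable) (auto simp: fmeasurable_def)
  thus ?thesis unfolding GG_def by (simp add: measure_nonneg antisym)
qed

lemma GG_ge1: "1 \<le> t \<Longrightarrow> GG A t = measure lborel A"
proof -
  assume t: "1 \<le> t"
  hence "A \<inter> {..t} = A" using A_sub by auto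
  thus ?thesis unfolding GG_def by simp
qed

lemma GG_le: "GG A t \<le> measure lborel A"
  unfolding GG_def using A_fm by (intro measure_mono_fmeasurable) auto

lemma GG_nonneg: "0 \<le> GG A t"
  unfolding GG_def by simp

lemma GG_level:
  assumes x0: "0 \<le> x" and xp: "x < measure lborel A"
  shows "\<exists>s1. GG A s1 = x \<and> (\<forall>s. x < GG A s \<longleftrightarrow> s1 < s)"
proof -
  define S where "S = {0..1} \<inter> GG A -` {..x}"
  have clS: "closed S" unfolding S_def
    by (intro continuous_closed_preimage GG_cont) auto
  have 0: "0 \<in> S" unfolding S_def using x0 GG_nonpos[of 0] by auto
  have bdd: "bdd_above S" unfolding S_def by (auto intro: bdd_aboveI[of _ 1])
  define s1 where "s1 = Sup S"
  have s1S: "s1 \<in> S" unfolding s1_def using clS 0 bdd closed_contains_Sup by blast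
  obtain c where c: "0 \<le> c" "c \<le> 1" "GG A c = x"
    using IVT'[of "GG A" 0 x 1] GG_nonpos[of 0] GG_ge1[of 1] x0 xp GG_cont by force
  have "c \<in> S" unfolding S_def using c by auto
  hence "c \<le> s1" unfolding s1_def using bdd by (intro cSup_upper)
  hence "GG A c \<le> GG A s1" by (rule GG_mono)
  moreover have "GG A s1 \<le> x" using s1S unfolding S_def by auto
  ultimately have gs1: "GG A s1 = x" using c by auto
  have "x < GG A s \<longleftrightarrow> s1 < s" for s
  proof
    assume "x < GG A s"
    thus "s1 < s" using GG_mono[of s s1] gs1 by (cases "s \<le> s1") auto
  next
    assume ss: "s1 < s"
    show "x < GG A s"
    proof (cases "s \<le> 1")
      case True
      have "s \<notin> S"
      proof
        assume "s \<in> S" hence "s \<le> s1" unfolding s1_def using bdd by (intro cSup_upper)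
        thus False using ss by simp
      qed
      moreover have "0 \<le> s" using ss s1S unfolding S_def by auto
      ultimately show ?thesis using True unfolding S_def by auto
    next
      case False thus ?thesis using GG_ge1[of s] xp by simp
    qed
  qed
  thus ?thesis using gs1 by blast
qed

lemma GG_tail: "emeasure lborel (A \<inter> GG A -` {x<..}) = emeasure lborel ({0..measure lborel A} \<inter> {x<..})"
proof -
  define p where "p = measure lborel A"
  have p0: "0 \<le> p" unfolding p_def by simp
  have Afin: "emeasure lborel A = ennreal p" unfolding p_def using A_fin
    by (simp add: emeasure_eq_ennreal_measure less_top)
  show ?thesis
  proof (cases "x < 0")
    case True
    hence "\<forall>s. x < GG A s" using GG_nonneg by (metis less_le_trans)
    hence "A \<inter> GG A -` {x<..} = A" by auto
    moreover have "{0..p} \<inter> {x<..} = {0..p}" using True by auto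
    ultimately show ?thesis using Afin p0 unfolding p_def[symmetric] by simp
  next
    case x0: False
    show ?thesis
    proof (cases "p \<le> x")
      case True
      hence "\<forall>s. \<not> x < GG A s" using GG_le unfolding p_def by (meson linorder_not_le order_trans)
      hence "A \<inter> GG A -` {x<..} = {}" by auto
      moreover have "{0..p} \<inter> {x<..} = {}" using True by auto
      ultimately show ?thesis unfolding p_def[symmetric] by simp
    next
      case False
      then obtain s1 where s1: "GG A s1 = x" "\<And>s. x < GG A s \<longleftrightarrow> s1 < s"
        using GG_level[of x] x0 unfolding p_def by auto
      have e1: "A \<inter> GG A -` {x<..} = A - (A \<inter> {..s1})" by (rule set_eqI) (simp add: s1(2) not_le, blast)
      have "measure lborel (A - (A \<inter> {..s1})) = p - GG A s1"
        unfolding p_def GG_def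
        by (rule measure_Diff) (use A_fm AS_fm[of "{..s1}"] in \<open>auto simp: fmeasurable_def\<close>)
      hence "emeasure lborel (A \<inter> GG A -` {x<..}) = ennreal (p - x)"
        unfolding e1 using s1 A_fm AS_fm[of "{..s1}"]
        by (subst emeasure_eq_measure2) auto
      moreover have "{0..p} \<inter> {x<..} = {x<..p}" using x0 by auto
      ultimately show ?thesis using False unfolding p_def[symmetric] by simp
    qed
  qed
qed

lemma GG_push:
  "distr (density lborel (\<lambda>x. ennreal (indicator A x))) borel (GG A)
   = density lborel (\<lambda>x. ennreal (indicator {0..measure lborel A} x))"
  (is "?L = ?R")
proof (rule measure_eqI_lessThan)
  show "sets ?L = sets borel" "sets ?R = sets borel" by auto
  have eqL: "emeasure ?L {x<..} = emeasure lborel (A \<inter> GG A -` {x<..})" for x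
  proof -
    have "emeasure ?L {x<..} = emeasure (density lborel (indicator A)) (GG A -` {x<..})"
      by (subst emeasure_distr) (auto simp: ennreal_indicator)
    also have "\<dots> = emeasure lborel (A \<inter> GG A -` {x<..})"
      using A_sets measurable_sets[OF GG_meas, of "{x<..}"] by (subst emeasure_restricted) auto
    finally show ?thesis .
  qed
  have eqR: "emeasure ?R {x<..} = emeasure lborel ({0..measure lborel A} \<inter> {x<..})" for x
    by (simp add: ennreal_indicator emeasure_restricted)
  show "emeasure ?L {x<..} < \<infinity>" for x
  proof -
    have "emeasure lborel (A \<inter> GG A -` {x<..}) \<le> emeasure lborel A"
      using A_sets by (intro emeasure_mono) auto
    thus ?thesis using eqL A_fin by (simp add: order_le_less_trans)
  qed
  show "emeasure ?L {x<..} = emeasure ?R {x<..}" for x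
    using eqL eqR GG_tail by simp
qed

lemma GG_int:
  "(LINT t:A|lborel. GG A t * (measure lborel A - GG A t)) = (measure lborel A)^3 / 6"
proof -
  define p where "p = measure lborel A"
  have p0: "0 \<le> p" unfolding p_def by simp
  let ?phi = "\<lambda>x::real. x * (p - x)"
  have "(LINT t:A|lborel. ?phi (GG A t)) = integral\<^sup>L (density lborel (\<lambda>x. ennreal (indicator A x))) (\<lambda>t. ?phi (GG A t))"
    using A_sets by (subst integral_density) (auto simp: set_lebesgue_integral_def)
  also have "\<dots> = integral\<^sup>L (distr (density lborel (\<lambda>x. ennreal (indicator A x))) borel (GG A)) ?phi"
    by (subst integral_distr) auto
  also have "\<dots> = integral\<^sup>L (density lborel (\<lambda>x. ennreal (indicator {0..p} x))) ?phi"
    unfolding GG_push p_def ..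
  also have "\<dots> = (LBINT x. indicator {0..p} x *\<^sub>R ?phi x)"
    by (subst integral_density) auto
  also have "\<dots> = (p * p^2/2 - p^3/3) - (p * 0^2/2 - 0^3/3)"
    by (rule integral_FTC_atLeastAtMost[where F="\<lambda>x. p * x^2/2 - x^3/3"])
       (use p0 in \<open>auto intro!: derivative_eq_intros continuous_intros simp: has_real_derivative_iff_has_vector_derivative[symmetric] algebra_simps power2_eq_square\<close>)
  also have "\<dots> = p^3/6" by (simp add: power2_eq_square power3_eq_cube field_simps)
  finally show ?thesis unfolding p_def .
qed

lemma GG_lower: "(measure lborel A)^3 / 6 \<le> (LINT t:{0..1}|lborel. GG A t * (measure lborel A - GG A t))"
proof -
  define p where "p = measure lborel A"
  let ?g = "\<lambda>t. GG A t * (p - GG A t)"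
  have nn: "0 \<le> ?g t" for t using GG_nonneg[of t] GG_le[of t] unfolding p_def by simp
  have si: "set_integrable lborel S ?g" if "S \<subseteq> {0..1}" "S \<in> sets borel" for S
  proof -
    have "set_integrable lborel {0..1::real} ?g"
      by (rule borel_integrable_atLeastAtMost') (intro continuous_intros GG_cont)
    thus ?thesis using that by (metis set_integrable_subset sets_lborel)
  qed
  have "(LINT t:{0..1}|lborel. ?g t) = (LINT t:A|lborel. ?g t) + (LINT t:({0..1}-A)|lborel. ?g t)"
  proof -
    have "{0..1} = A \<union> ({0..1} - A)" using A_sub by auto
    hence "(LINT t:{0..1}|lborel. ?g t) = (LINT t:(A \<union> ({0..1} - A))|lborel. ?g t)" by simp
    also have "\<dots> = (LINT t:A|lborel. ?g t) + (LINT t:({0..1}-A)|lborel. ?g t)"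
      using A_sub A_sets by (intro set_integral_Un si) auto
    finally show ?thesis .
  qed
  moreover have "0 \<le> (LINT t:({0..1}-A)|lborel. ?g t)"
    unfolding set_lebesgue_integral_def using nn by (intro Bochner_Integration.integral_nonneg) (auto simp: indicator_def)
  moreover have "(LINT t:A|lborel. ?g t) = p^3/6" unfolding p_def by (rule GG_int)
  ultimately show ?thesis unfolding p_def by linarith
qed

lemma saw_int: "(LINT u:A|lborel. saw u t) = t * measure lborel A - GG A t"
proof -
  have "(LINT u:A|lborel. saw u t) = (LINT u:A|lborel. t - indicator {..t} u)"
    by (intro set_lebesgue_integral_cong) (auto simp: saw_def A_sets indicator_def)
  also have "\<dots> = (LINT u:A|lborel. t) - (LINT u:A|lborel. indicator {..t} u)"
  proof (intro set_integral_diff)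
    show "set_integrable lborel A (\<lambda>u. t)"
      using A_sets A_fin by (simp add: set_integrable_def integrable_real_indicator)
    have "emeasure lborel (A \<inter> {..t}) < \<infinity>" using AS_fm[of "{..t}"] by (simp add: fmeasurable_def)
    hence "integrable lborel (indicator (A \<inter> {..t}) :: real \<Rightarrow> real)"
      using A_sets by (intro integrable_real_indicator) auto
    moreover have "(\<lambda>x. indicator A x * indicator {..t} x) = (indicator (A \<inter> {..t}) :: real\<Rightarrow>real)"
      by (auto simp: indicator_def fun_eq_iff)
    ultimately show "set_integrable lborel A (\<lambda>u. indicator {..t} u :: real)"
      by (simp add: set_integrable_def)
  qed
  also have "(LINT u:A|lborel. indicator {..t} u) = GG A t"
    unfolding GG_def set_lebesgue_integral_def
    by (simp add: indicator_inter_arith[symmetric] mult.commute)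
  also have "(LINT u:A|lborel. t) = measure lborel A * t"
    using A_sets A_fin by (simp add: set_integral_const)
  finally show ?thesis by simp
qed

lemma cell_fubini:
  assumes p0: "0 < measure lborel A"
  shows "(LINT u:A|lborel. LINT t:{0..1}|lborel. (saw u t - (t - GG A t / measure lborel A))^2)
        = (LINT t:{0..1}|lborel. GG A t * (measure lborel A - GG A t)) / measure lborel A"
proof -
  define p where "p = measure lborel A"
  have pp: "0 < p" using p0 unfolding p_def .
  define f where "f u t = indicator A u * (indicator {0..1} t * (GG A t / p - indicator {..t} u)^2)" for u t :: real
  have Ameas[measurable]: "A \<in> sets borel" by (rule A_sets)
  have fmeas: "(\<lambda>(u,t). f u t) \<in> borel_measurable (lborel \<Otimes>\<^sub>M lborel)"
    unfolding f_def by measurable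
  have saweq: "saw u t - (t - GG A t / p) = GG A t / p - indicator {..t} u" for u t
    by (simp add: saw_def indicator_def)
  have L: "(LINT u:A|lborel. LINT t:{0..1}|lborel. (saw u t - (t - GG A t / p))^2) = (LBINT u. LBINT t. f u t)"
    unfolding set_lebesgue_integral_def f_def saweq by simp
  have cbound: "0 \<le> GG A t / p" "GG A t / p \<le> 1" for t
    using GG_nonneg[of t] GG_le[of t] pp unfolding p_def by auto
  have int: "integrable (lborel \<Otimes>\<^sub>M lborel) (\<lambda>(u,t). f u t)"
  proof (rule Bochner_Integration.integrable_bound)
    have "emeasure (lborel \<Otimes>\<^sub>M lborel) (A \<times> {0..1::real}) = emeasure lborel A * 1"
      by (subst lborel.emeasure_pair_measure_Times) auto
    hence "emeasure (lborel \<Otimes>\<^sub>M lborel) (A \<times> {0..1::real}) < \<infinity>" using A_fin by simp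
    thus "integrable (lborel \<Otimes>\<^sub>M lborel) (indicator (A \<times> {0..1::real}) :: _ \<Rightarrow> real)"
      by (intro integrable_real_indicator) auto
    show "(\<lambda>(u,t). f u t) \<in> borel_measurable (lborel \<Otimes>\<^sub>M lborel)" by (rule fmeas)
    show "AE x in lborel \<Otimes>\<^sub>M lborel. norm ((\<lambda>(u,t). f u t) x) \<le> norm (indicator (A \<times> {0..1::real}) x :: real)"
    proof (intro AE_I2)
      fix x :: "real \<times> real"
      obtain u t where x: "x = (u,t)" by (cases x)
      have "\<bar>GG A t / p - indicator {..t} u\<bar> \<le> 1"
        using cbound[of t] by (auto simp: indicator_def)
      hence "(GG A t / p - indicator {..t} u)^2 \<le> 1" by (simp add: abs_square_le_1)
      moreover have "0 \<le> (GG A t / p - indicator {..t} u)^2" by simp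
      ultimately show "norm ((\<lambda>(u,t). f u t) x) \<le> norm (indicator (A \<times> {0..1::real}) x :: real)"
        unfolding x f_def by (auto simp: indicator_def)
    qed
  qed
  have inner: "(LBINT u. f u t) = indicator {0..1} t * (GG A t * (p - GG A t) / p)" for t
  proof -
    let ?c = "GG A t / p"
    have pw: "f u t = indicator {0..1} t * (?c^2 * indicator A u + (1 - 2 * ?c) * indicator (A \<inter> {..t}) u)" for u
      unfolding f_def by (auto simp: indicator_def power2_eq_square algebra_simps)
    have iA: "integrable lborel (indicator A :: real \<Rightarrow> real)"
      using A_fin by (intro integrable_real_indicator) auto
    have iAt: "integrable lborel (indicator (A \<inter> {..t}) :: real \<Rightarrow> real)"
      using AS_fm[of "{..t}"] by (intro integrable_real_indicator) (auto simp: fmeasurable_def)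
    have "(LBINT u. f u t) = indicator {0..1} t * (?c^2 * p + (1 - 2 * ?c) * GG A t)"
      unfolding pw using iA iAt
      by (simp add: p_def GG_def A_sets)
    also have "\<dots> = indicator {0..1} t * (GG A t * (p - GG A t) / p)"
      using pp by (simp add: field_simps power2_eq_square)
    finally show ?thesis .
  qed
  have "(LBINT u. LBINT t. f u t) = (LBINT t. LBINT u. f u t)"
    using lborel_pair.Fubini_integral[OF int] by simp
  also have "\<dots> = (LBINT t. indicator {0..1} t * (GG A t * (p - GG A t)) / p)"
    unfolding inner by simp
  also have "\<dots> = (LINT t:{0..1}|lborel. GG A t * (p - GG A t)) / p"
    unfolding set_lebesgue_integral_def by simp
  finally show ?thesis using L unfolding p_def by simp
qed

end


definition cell :: "((real \<Rightarrow> real) \<Rightarrow> nat) \<Rightarrow> nat \<Rightarrow> real set" where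
  "cell f i = {u \<in> {0..1}. f (saw u) = i}"

definition Hi :: "((real \<Rightarrow> real) \<Rightarrow> nat) \<Rightarrow> nat \<Rightarrow> real \<Rightarrow> real" where
  "Hi f i u = (LINT t : {0..1} | lborel. (saw u t - cond_mean f i t)\<^sup>2)"

lemma saw_meas[measurable]: "(\<lambda>(u,t). saw u t) \<in> borel_measurable (borel \<Otimes>\<^sub>M borel)"
  unfolding saw_def by measurable

lemma saw_meas2[measurable]: "(\<lambda>t. saw u t) \<in> borel_measurable borel"
  unfolding saw_def by measurable

lemma saw_bound: "t \<in> {0..1} \<Longrightarrow> \<bar>saw u t\<bar> \<le> 1"
  by (auto simp: saw_def)

locale enc =
  fixes f :: "(real \<Rightarrow> real) \<Rightarrow> nat"
  assumes enc: "encoder f"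
begin

lemma cell_sets: "cell f i \<in> sets borel"
proof -
  have m: "(\<lambda>u. f (saw u)) \<in> restrict_space borel {0..1} \<rightarrow>\<^sub>M count_space UNIV"
    using enc unfolding encoder_def .
  have "(\<lambda>u. f (saw u)) -` {i} \<inter> space (restrict_space borel {0..1::real}) \<in> sets (restrict_space borel {0..1})"
    by (rule measurable_sets[OF m]) auto
  moreover have "(\<lambda>u. f (saw u)) -` {i} \<inter> space (restrict_space borel {0..1::real}) = cell f i"
    unfolding cell_def by auto
  ultimately show ?thesis by (subst (asm) sets_restrict_space_iff) auto
qed

lemma cell_sub: "cell f i \<subseteq> {0..1}" unfolding cell_def by auto

lemma cellA: "cellA (cell f i)"
  by unfold_locales (rule cell_sets, rule cell_sub)

lemma cp_eq: "cell_prob f i = measure lborel (cell f i)"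
  unfolding cell_prob_def cell_def ..

lemma cm_eq: "cond_mean f i t = (t * cell_prob f i - GG (cell f i) t) / cell_prob f i"
proof -
  interpret cellA "cell f i" by (rule cellA)
  show ?thesis unfolding cond_mean_def cp_eq using saw_int[of t] unfolding cell_def by simp
qed

lemma cm_meas[measurable]: "cond_mean f i \<in> borel_measurable borel"
proof -
  interpret cellA "cell f i" by (rule cellA)
  show ?thesis unfolding cm_eq[abs_def] by measurable
qed

lemma cm_bound: "t \<in> {0..1} \<Longrightarrow> \<bar>cond_mean f i t\<bar> \<le> 1"
proof -
  interpret cellA "cell f i" by (rule cellA)
  assume t: "t \<in> {0..1}"
  show ?thesis
  proof (cases "cell_prob f i = 0")
    case True thus ?thesis unfolding cm_eq by simp
  next
    case False
    hence pp: "0 < cell_prob f i" unfolding cp_eq using measure_nonneg[of lborel "cell f i"] by linarith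
    have "cond_mean f i t = t - GG (cell f i) t / cell_prob f i"
      unfolding cm_eq using pp by (simp add: field_simps)
    moreover have "0 \<le> GG (cell f i) t / cell_prob f i" "GG (cell f i) t / cell_prob f i \<le> 1"
      using GG_nonneg[of t] GG_le[of t] pp unfolding cp_eq by auto
    ultimately show ?thesis using t by auto
  qed
qed

lemma Hi_integrand_int: "set_integrable lborel {0..1} (\<lambda>t. (saw u t - cond_mean f i t)\<^sup>2)"
proof (rule set_integrable_bound[where f="\<lambda>_. 4::real"])
  show "set_integrable lborel {0..1::real} (\<lambda>_. 4::real)"
    by (rule borel_integrable_atLeastAtMost') (intro continuous_intros)
  show "set_borel_measurable lborel {0..1} (\<lambda>t. (saw u t - cond_mean f i t)\<^sup>2)"
    unfolding set_borel_measurable_def by measurable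
  show "AE x\<in>{0..1} in lborel. norm ((saw u x - cond_mean f i x)\<^sup>2) \<le> norm (4::real)"
  proof (intro AE_I2 impI)
    fix x :: real assume x: "x \<in> {0..1}"
    have "\<bar>saw u x - cond_mean f i x\<bar> \<le> 2" using saw_bound[OF x, of u] cm_bound[OF x, of i] by linarith
    hence "(saw u x - cond_mean f i x)\<^sup>2 \<le> 2^2"
      by (metis abs_ge_zero power2_abs power_mono)
    thus "norm ((saw u x - cond_mean f i x)\<^sup>2) \<le> norm (4::real)" by simp
  qed
qed

lemma Hi_bounds: "0 \<le> Hi f i u" "Hi f i u \<le> 4"
proof -
  show "0 \<le> Hi f i u" unfolding Hi_def set_lebesgue_integral_def
    by (intro Bochner_Integration.integral_nonneg) (auto simp: indicator_def)
  have "Hi f i u \<le> (LINT t:{0..1::real}|lborel. (4::real))"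
    unfolding Hi_def
  proof (rule set_integral_mono)
    show "set_integrable lborel {0..1} (\<lambda>t. (saw u t - cond_mean f i t)\<^sup>2)" by (rule Hi_integrand_int)
    show "set_integrable lborel {0..1::real} (\<lambda>_. 4::real)"
      by (rule borel_integrable_atLeastAtMost') (intro continuous_intros)
    fix t :: real assume t: "t \<in> {0..1}"
    have "\<bar>saw u t - cond_mean f i t\<bar> \<le> 2" using saw_bound[OF t, of u] cm_bound[OF t, of i] by linarith
    hence "(saw u t - cond_mean f i t)\<^sup>2 \<le> 2^2"
      by (metis abs_ge_zero power2_abs power_mono)
    thus "(saw u t - cond_mean f i t)\<^sup>2 \<le> 4" by simp
  qed
  also have "\<dots> = 4" by (simp add: set_integral_const)
  finally show "Hi f i u \<le> 4" .
qed

lemma Hi_meas[measurable]: "Hi f i \<in> borel_measurable borel"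
proof -
  have "(\<lambda>u. LBINT t. indicator {0..1} t *\<^sub>R (saw u t - cond_mean f i t)\<^sup>2) \<in> borel_measurable borel"
    by (rule lborel.borel_measurable_lebesgue_integral) measurable
  thus ?thesis unfolding Hi_def[abs_def] set_lebesgue_integral_def .
qed

lemma dist_eq: "distortion f = (LINT u:{0..1}|lborel. Hi f (f (saw u)) u)"
  unfolding distortion_def Hi_def ..

lemma D_meas: "set_borel_measurable lborel {0..1} (\<lambda>u. Hi f (f (saw u)) u)"
proof -
  define g' where "g' u = (if u \<in> {0..1} then f (saw u) else 0)" for u :: real
  have "(\<lambda>u. f (saw u)) \<in> restrict_space borel {0..1} \<rightarrow>\<^sub>M count_space UNIV"
    using enc unfolding encoder_def .
  hence g'm: "g' \<in> borel \<rightarrow>\<^sub>M count_space UNIV"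
    unfolding g'_def by (subst (asm) measurable_restrict_space_iff) auto
  have "(\<lambda>u. indicator {0..1} u * Hi f (g' u) u) \<in> borel \<rightarrow>\<^sub>M borel"
    by (rule measurable_compose_countable'[where f="\<lambda>i u. indicator {0..1} u * Hi f i u" and g=g' and I=UNIV])
       (use g'm in auto)
  moreover have "(\<lambda>u. indicator {0..1} u * Hi f (g' u) u) = (\<lambda>u. indicator {0..1} u *\<^sub>R Hi f (f (saw u)) u)"
    by (auto simp: g'_def indicator_def fun_eq_iff)
  ultimately show ?thesis unfolding set_borel_measurable_def by simp
qed

lemma D_int: "set_integrable lborel {0..1} (\<lambda>u. Hi f (f (saw u)) u)"
proof (rule set_integrable_bound[where f="\<lambda>_. 4::real"])
  show "set_integrable lborel {0..1::real} (\<lambda>_. 4::real)"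
    by (rule borel_integrable_atLeastAtMost') (intro continuous_intros)
  show "set_borel_measurable lborel {0..1} (\<lambda>u. Hi f (f (saw u)) u)" by (rule D_meas)
  show "AE x\<in>{0..1} in lborel. norm (Hi f (f (saw x)) x) \<le> norm (4::real)"
    using Hi_bounds by (intro AE_I2) auto
qed

definition "contrib i = (LINT u:cell f i|lborel. Hi f (f (saw u)) u)"

lemma cell_int: "set_integrable lborel (cell f i) (\<lambda>u. Hi f (f (saw u)) u)"
  using D_int cell_sets[of i] cell_sub[of i] by (metis set_integrable_subset sets_lborel)

lemma contrib_eq: "contrib i = (LINT u:cell f i|lborel. Hi f i u)"
  unfolding contrib_def
proof (rule set_lebesgue_integral_cong)
  show "cell f i \<in> sets lborel" using cell_sets by simp
  show "\<forall>u. u \<in> cell f i \<longrightarrow> Hi f (f (saw u)) u = Hi f i u" by (simp add: cell_def)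
qed

lemma contrib_lower: "(cell_prob f i)^2 / 6 \<le> contrib i"
proof (cases "cell_prob f i = 0")
  case True
  have "0 \<le> contrib i" unfolding contrib_eq set_lebesgue_integral_def
    using Hi_bounds by (intro Bochner_Integration.integral_nonneg) (auto simp: indicator_def)
  thus ?thesis using True by simp
next
  case False
  interpret cellA "cell f i" by (rule cellA)
  define p where "p = cell_prob f i"
  have pp: "0 < p" using False measure_nonneg[of lborel "cell f i"] unfolding p_def cp_eq by linarith
  have cm: "cond_mean f i t = t - GG (cell f i) t / measure lborel (cell f i)" for t
    unfolding cm_eq using pp unfolding p_def cp_eq by (simp add: field_simps)
  have "contrib i = (LINT u:cell f i|lborel. LINT t:{0..1}|lborel. (saw u t - (t - GG (cell f i) t / measure lborel (cell f i)))^2)"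
    unfolding contrib_eq Hi_def cm ..
  also have "\<dots> = (LINT t:{0..1}|lborel. GG (cell f i) t * (p - GG (cell f i) t)) / p"
    using cell_fubini pp unfolding p_def cp_eq by simp
  finally have ce: "contrib i = \<dots>" .
  have "p^3/6 \<le> (LINT t:{0..1}|lborel. GG (cell f i) t * (p - GG (cell f i) t))"
    using GG_lower unfolding p_def cp_eq .
  hence "(p^3/6)/p \<le> (LINT t:{0..1}|lborel. GG (cell f i) t * (p - GG (cell f i) t)) / p"
    by (rule divide_right_mono) (use pp in auto)
  moreover have "(p^3/6)/p = p^2/6" using pp by (simp add: power2_eq_square power3_eq_cube)
  ultimately have "p^2/6 \<le> (LINT t:{0..1}|lborel. GG (cell f i) t * (p - GG (cell f i) t)) / p" by linarith
  thus ?thesis using ce unfolding p_def by linarith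
qed

lemma contrib_nonneg: "0 \<le> contrib i"
  using contrib_lower[of i] by (smt (verit) divide_nonneg_nonneg zero_le_power2)

lemma sum_contrib: "(\<Sum>i<N. contrib i) = (LINT u:(\<Union>i<N. cell f i)|lborel. Hi f (f (saw u)) u)"
  unfolding contrib_def
  by (rule set_integral_finite_UN_AE[symmetric]) (use cell_sets cell_int in \<open>auto simp: cell_def\<close>)

lemma sum_le: "(\<Sum>i<N. contrib i) \<le> distortion f"
proof -
  let ?U = "\<Union>i<N. cell f i"
  have Us: "?U \<in> sets borel" using cell_sets by auto
  have Usub: "?U \<subseteq> {0..1}" using cell_sub by auto
  have "distortion f = (LINT u:(?U \<union> ({0..1} - ?U))|lborel. Hi f (f (saw u)) u)"
    unfolding dist_eq using Usub by (simp add: Un_absorb1 Un_Diff_cancel)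
  also have "\<dots> = (LINT u:?U|lborel. Hi f (f (saw u)) u) + (LINT u:({0..1} - ?U)|lborel. Hi f (f (saw u)) u)"
    by (rule set_integral_Un) (use D_int Us Usub in \<open>auto intro: set_integrable_subset\<close>)
  moreover have "0 \<le> (LINT u:({0..1} - ?U)|lborel. Hi f (f (saw u)) u)"
    unfolding set_lebesgue_integral_def
    using Hi_bounds by (intro Bochner_Integration.integral_nonneg) (auto simp: indicator_def)
  ultimately show ?thesis unfolding sum_contrib by linarith
qed

lemma sum_eq: assumes "\<And>u. u \<in> {0..1} \<Longrightarrow> f (saw u) < N"
  shows "(\<Sum>i<N. contrib i) = distortion f"
proof -
  have "(\<Union>i<N. cell f i) = {0..1}" using assms by (auto simp: cell_def)
  thus ?thesis unfolding sum_contrib dist_eq by simp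
qed

end


lemma tangent_log:
  fixes p S :: real
  assumes "0 < p" "0 < S"
  shows "log 2 p \<le> log 2 S + (p - S) / (S * ln 2)"
proof -
  have "ln (p / S) \<le> p / S - 1" using assms by (intro ln_le_minus_one) simp
  hence "ln p - ln S \<le> (p - S) / S" using assms by (simp add: ln_div field_simps)
  hence "(ln p - ln S) / ln 2 \<le> ((p - S) / S) / ln 2" by (rule divide_right_mono) simp
  thus ?thesis using assms by (simp add: log_def diff_divide_distrib)
qed

lemma entropy_term_lower:
  fixes p S :: real
  assumes "0 \<le> p" "0 < S"
  shows "- p * log 2 S - p * (p - S) / (S * ln 2) \<le> (if p = 0 then 0 else - p * log 2 p)"
proof (cases "p = 0")
  case False
  hence pp: "0 < p" using assms by simp
  have "p * log 2 p \<le> p * (log 2 S + (p - S) / (S * ln 2))"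
    using tangent_log[OF pp assms(2)] pp by (intro mult_left_mono) auto
  thus ?thesis using False by (simp add: algebra_simps)
qed simp

context enc
begin

lemma cp_nonneg: "0 \<le> cell_prob f i" unfolding cp_eq by simp

lemma cp_le1: "cell_prob f i \<le> 1"
proof -
  have "measure lborel (cell f i) \<le> measure lborel {0..1::real}"
    using cell_sub cell_sets by (intro measure_mono_fmeasurable) (auto simp: Icc_fm)
  thus ?thesis unfolding cp_eq by simp
qed

lemma sums_p: "(\<lambda>i. cell_prob f i) sums 1"
proof -
  have "(\<lambda>i. measure lborel (cell f i)) sums measure lborel (\<Union>(range (cell f)))"
  proof (rule measure_UNION)
    show "range (cell f) \<subseteq> sets lborel" using cell_sets by auto
    show "disjoint_family (cell f)" by (auto simp: disjoint_family_on_def cell_def)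
    have "\<Union>(range (cell f)) = {0..1}" by (auto simp: cell_def)
    thus "emeasure lborel (\<Union>(range (cell f))) \<noteq> \<infinity>" by simp
  qed
  moreover have "\<Union>(range (cell f)) = {0..1}" by (auto simp: cell_def)
  ultimately show ?thesis unfolding cp_eq by simp
qed

lemma lower_bound:
  assumes D: "distortion f \<le> \<Delta>" and Dp: "0 < \<Delta>"
  shows "ereal (log 2 (1 / (6 * \<Delta>))) \<le> entropy f"
proof -
  define p where "p i = cell_prob f i" for i
  have p0: "0 \<le> p i" for i unfolding p_def by (rule cp_nonneg)
  have p1: "p i \<le> 1" for i unfolding p_def by (rule cp_le1)
  have ps: "p sums 1" unfolding p_def using sums_p by (simp add: fun_eq_iff)
  have sp: "summable p" using ps by (simp add: sums_iff)
  have sp2: "summable (\<lambda>i. (p i)^2)"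
  proof (rule summable_comparison_test[OF _ sp])
    show "\<exists>N. \<forall>n\<ge>N. norm ((p n)^2) \<le> p n"
      using p0 p1 by (auto simp: power2_eq_square mult_le_one intro!: exI[of _ 0] mult_left_le)
  qed
  define S where "S = (\<Sum>i. (p i)^2)"
  have S_le: "S / 6 \<le> distortion f"
  proof -
    have "(\<Sum>i. (p i)^2 / 6) \<le> distortion f"
    proof (rule suminf_le_const)
      show "summable (\<lambda>i. (p i)^2 / 6)" using sp2 by (rule summable_divide)
      fix n
      have "(\<Sum>i<n. (p i)^2 / 6) \<le> (\<Sum>i<n. contrib i)"
        using contrib_lower unfolding p_def by (intro sum_mono) auto
      also have "\<dots> \<le> distortion f" by (rule sum_le)
      finally show "(\<Sum>i<n. (p i)^2 / 6) \<le> distortion f" .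
    qed
    moreover have "(\<Sum>i. (p i)^2 / 6) = S / 6" unfolding S_def using sp2 by (rule suminf_divide)
    ultimately show ?thesis by simp
  qed
  have S_pos: "0 < S"
  proof -
    have "0 \<le> S" unfolding S_def using sp2 by (intro suminf_nonneg) auto
    moreover have "S \<noteq> 0"
    proof
      assume "S = 0"
      hence "\<forall>i. (p i)^2 = 0" unfolding S_def using sp2 by (subst (asm) suminf_eq_zero_iff) auto
      hence "p = (\<lambda>_. 0)" by auto
      with ps have "(\<lambda>_. 0::real) sums 1" by simp
      thus False using sums_zero sums_unique2 by fastforce
    qed
    ultimately show ?thesis by simp
  qed
  have loglow: "log 2 (1 / (6 * \<Delta>)) \<le> - log 2 S"
  proof -
    have "S \<le> 6 * \<Delta>" using S_le D by simp
    hence "log 2 S \<le> log 2 (6 * \<Delta>)" using S_pos Dp by (subst log_le_cancel_iff) auto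
    moreover have "log 2 (1 / (6 * \<Delta>)) = - log 2 (6 * \<Delta>)" using Dp by (simp add: log_divide)
    ultimately show ?thesis by simp
  qed
  define e where "e i = (if p i = 0 then 0 else - p i * log 2 (p i))" for i
  define b where "b i = - p i * log 2 S - p i * (p i - S) / (S * ln 2)" for i
  have eb: "b i \<le> e i" for i unfolding b_def e_def by (rule entropy_term_lower[OF p0 S_pos])
  have e0: "0 \<le> e i" for i
  proof (cases "p i = 0")
    case False
    hence "0 < p i" using p0[of i] by simp
    hence "log 2 (p i) \<le> 0" using p1[of i] by simp
    thus ?thesis using False p0[of i] unfolding e_def by (simp add: mult_nonneg_nonpos)
  qed (simp add: e_def)
  have bs: "b sums (- log 2 S)"
  proof -
    have s2: "(\<lambda>i. (p i)^2) sums S" unfolding S_def using sp2 by (simp add: summable_sums)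
    have "(\<lambda>i. (- log 2 S) * p i - ((p i)^2 - S * p i) / (S * ln 2)) sums ((- log 2 S) * 1 - (S - S * 1) / (S * ln 2))"
      by (intro sums_diff sums_mult sums_divide s2 ps)
    moreover have "(\<lambda>i. (- log 2 S) * p i - ((p i)^2 - S * p i) / (S * ln 2)) = b"
      unfolding b_def by (auto simp: fun_eq_iff power2_eq_square algebra_simps diff_divide_distrib)
    ultimately show ?thesis by simp
  qed
  have "entropy f = (\<Sum>i. ereal (e i))"
    unfolding entropy_def e_def p_def ..
  also have "\<dots> = (SUP n. \<Sum>i<n. ereal (e i))"
    using e0 by (intro suminf_ereal_eq_SUP) simp
  finally have ent: "entropy f = (SUP n. \<Sum>i<n. ereal (e i))" .
  have "ereal (- log 2 S) \<le> (SUP n. \<Sum>i<n. ereal (e i))"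
  proof (rule LIMSEQ_le_const2)
    show "(\<lambda>n. ereal (\<Sum>i<n. b i)) \<longlonglongrightarrow> ereal (- log 2 S)"
      using bs unfolding sums_def by (rule tendsto_ereal)
    show "\<exists>N. \<forall>n\<ge>N. ereal (\<Sum>i<n. b i) \<le> (SUP n. \<Sum>i<n. ereal (e i))"
    proof (intro exI allI impI)
      fix n :: nat
      have "ereal (\<Sum>i<n. b i) \<le> ereal (\<Sum>i<n. e i)" using eb by (simp add: sum_mono)
      also have "\<dots> = (\<Sum>i<n. ereal (e i))" by (simp add: sum_ereal)
      also have "\<dots> \<le> (SUP n. \<Sum>i<n. ereal (e i))" by (rule SUP_upper) simp
      finally show "ereal (\<Sum>i<n. b i) \<le> (SUP n. \<Sum>i<n. ereal (e i))" .
    qed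
  qed
  hence "ereal (- log 2 S) \<le> entropy f" unfolding ent .
  thus ?thesis using loglow by (meson ereal_less_eq(3) order_trans)
qed

end


definition fn :: "nat \<Rightarrow> (real \<Rightarrow> real) \<Rightarrow> nat" where
  "fn n x = (\<Sum>k\<in>{1..<n}. if 0 \<le> x (real k / real n) then 1 else 0)"

lemma fn_encoder: "encoder (fn n)"
proof -
  have "(\<lambda>u. fn n (saw u)) \<in> borel \<rightarrow>\<^sub>M count_space UNIV"
    unfolding fn_def saw_def by measurable
  thus ?thesis unfolding encoder_def by (rule measurable_restrict_space1)
qed

lemma fn_less: "1 \<le> n \<Longrightarrow> fn n x < n"
proof -
  assume n: "1 \<le> n"
  have "fn n x \<le> of_nat (card {1..<n}) * 1"
    unfolding fn_def by (rule sum_bounded_above) auto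
  thus ?thesis using n by simp
qed

lemma fn_val:
  assumes n: "1 \<le> n" and j: "j < n" and u1: "real j / real n < u" and u2: "u \<le> real (Suc j) / real n"
  shows "fn n (saw u) = j"
proof -
  have np: "0 < real n" using n by simp
  have uj: "real j < u * real n" "u * real n \<le> real j + 1" using u1 u2 np by (auto simp: field_simps)
  have iff: "0 \<le> saw u (real k / real n) \<longleftrightarrow> k \<le> j" if k: "k \<in> {1..<n}" for k
  proof (cases "k \<le> j")
    case True
    hence "real k / real n < u" using uj np by (simp add: field_simps)
    thus ?thesis using True by (simp add: saw_def)
  next
    case False
    hence "real j + 1 \<le> real k" by simp
    hence "u \<le> real k / real n" using uj np by (simp add: field_simps)
    moreover have "real k / real n < 1" using k np by (simp add: field_simps)
    ultimately show ?thesis using False by (simp add: saw_def)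
  qed
  have "fn n (saw u) = (\<Sum>k\<in>{1..<n}. if k \<le> j then 1 else 0)"
    unfolding fn_def by (rule sum.cong) (use iff in auto)
  also have "\<dots> = (\<Sum>k\<in>{k\<in>{1..<n}. k \<le> j}. 1)"
    by (rule sum.inter_filter[symmetric]) simp
  also have "{k\<in>{1..<n}. k \<le> j} = {1..j}" using j by auto
  finally show ?thesis by simp
qed

lemma fn_zero: "1 \<le> n \<Longrightarrow> fn n (saw 0) = 0"
proof -
  assume n: "1 \<le> n"
  have "\<not> 0 \<le> saw 0 (real k / real n)" if "k \<in> {1..<n}" for k
    using that n by (auto simp: saw_def field_simps)
  thus ?thesis unfolding fn_def by (intro sum.neutral) auto
qed

lemma fn_cell:
  assumes n: "1 \<le> n" and j: "j < n"
  shows "{real j / real n <.. real (Suc j) / real n} \<subseteq> cell (fn n) j"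
        "cell (fn n) j \<subseteq> {real j / real n .. real (Suc j) / real n}"
proof -
  have np: "0 < real n" using n by simp
  show "{real j / real n <.. real (Suc j) / real n} \<subseteq> cell (fn n) j"
  proof
    fix u assume u: "u \<in> {real j / real n <.. real (Suc j) / real n}"
    have a0: "0 \<le> real j / real n" by simp
    have b1: "real (Suc j) / real n \<le> 1" using j np by (simp add: field_simps)
    have "real j / real n < u" "u \<le> real (Suc j) / real n" using u by auto
    hence "0 \<le> u" "u \<le> 1" using a0 b1 by linarith+
    hence "u \<in> {0..1}" by simp
    thus "u \<in> cell (fn n) j" unfolding cell_def using fn_val[OF n j] u by auto
  qed
  show "cell (fn n) j \<subseteq> {real j / real n .. real (Suc j) / real n}"
  proof
    fix u assume u: "u \<in> cell (fn n) j"
    hence u01: "u \<in> {0..1}" and fu: "fn n (saw u) = j" by (auto simp: cell_def)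
    show "u \<in> {real j / real n .. real (Suc j) / real n}"
    proof (cases "u = 0")
      case True
      hence "j = 0" using fu fn_zero[OF n] by simp
      thus ?thesis using True np by simp
    next
      case False
      hence up: "0 < u" using u01 by simp
      define c where "c = \<lceil>u * real n\<rceil>"
      have c1: "u * real n \<le> c" "c < u * real n + 1" unfolding c_def by linarith+
      have "0 < u * real n" using up np by simp
      hence "0 < real_of_int c" using c1 by linarith
      hence cpos: "1 \<le> c" by simp
      have cn: "c \<le> int n" unfolding c_def using u01 np
        by (simp add: ceiling_le_iff mult_left_le_one_le)
      define j' where "j' = nat c - 1"
      have rj: "real (Suc j') = real_of_int c" unfolding j'_def using cpos by simp
      have j'n: "j' < n" unfolding j'_def using cn cpos by linarith
      have "real j' / real n < u" using c1 rj np by (simp add: field_simps)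
      moreover have "u \<le> real (Suc j') / real n" using c1 rj np by (simp add: field_simps)
      ultimately have "fn n (saw u) = j'" by (intro fn_val[OF n j'n])
      hence "j' = j" using fu by simp
      thus ?thesis using \<open>real j' / real n < u\<close> \<open>u \<le> real (Suc j') / real n\<close> by auto
    qed
  qed
qed

context cellA
begin

lemma GG_interval:
  assumes ab: "a \<le> b" and s1: "{a<..b} \<subseteq> A" and s2: "A \<subseteq> {a..b}"
  shows "measure lborel A = b - a"
    and "GG A t = (if t < a then 0 else if t \<le> b then t - a else b - a)"
proof -
  have m1: "measure lborel {a<..b} \<le> measure lborel A"
    using s1 A_fm by (intro measure_mono_fmeasurable) auto
  have m2: "measure lborel A \<le> measure lborel {a..b}"
    using s2 A_sets by (intro measure_mono_fmeasurable) (auto simp: Icc_fm)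
  show mA: "measure lborel A = b - a" using m1 m2 ab by simp
  show "GG A t = (if t < a then 0 else if t \<le> b then t - a else b - a)"
  proof (cases "t < a")
    case True
    hence "A \<inter> {..t} = {}" using s2 by auto
    thus ?thesis using True unfolding GG_def by simp
  next
    case ta: False
    show ?thesis
    proof (cases "t \<le> b")
      case True
      have "measure lborel {a<..t} \<le> measure lborel (A \<inter> {..t})"
        using s1 True AS_fm[of "{..t}"] by (intro measure_mono_fmeasurable) auto
      moreover have "measure lborel (A \<inter> {..t}) \<le> measure lborel {a..t}"
        using s2 A_sets by (intro measure_mono_fmeasurable) (auto simp: Icc_fm)
      ultimately show ?thesis using ta True unfolding GG_def by simp
    next
      case False
      hence "A \<inter> {..t} = A" using s2 by auto
      thus ?thesis using ta False mA unfolding GG_def by simp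
    qed
  qed
qed

lemma GG_int_interval:
  assumes ab: "a \<le> b" and s1: "{a<..b} \<subseteq> A" and s2: "A \<subseteq> {a..b}" and a0: "0 \<le> a" and b1: "b \<le> 1"
  shows "(LINT t:{0..1}|lborel. GG A t * (measure lborel A - GG A t)) = (b - a)^3 / 6"
proof -
  have pw: "indicator {0..1} t *\<^sub>R (GG A t * (measure lborel A - GG A t)) = indicator {a..b} t *\<^sub>R ((t - a) * (b - t))" for t
    using GG_interval[OF ab s1 s2] a0 b1 by (auto simp: indicator_def)
  have "(LINT t:{0..1}|lborel. GG A t * (measure lborel A - GG A t)) = (LBINT t. indicator {a..b} t *\<^sub>R ((t - a) * (b - t)))"
    unfolding set_lebesgue_integral_def pw ..
  also have "\<dots> = ((b - a) * (b - a)^2/2 - (b - a)^3/3) - ((b - a) * (a - a)^2/2 - (a - a)^3/3)"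
    by (rule integral_FTC_atLeastAtMost[where F="\<lambda>t. (b - a) * (t - a)^2/2 - (t - a)^3/3"])
       (use ab in \<open>auto intro!: derivative_eq_intros continuous_intros simp: has_real_derivative_iff_has_vector_derivative[symmetric] field_simps power2_eq_square\<close>)
  also have "\<dots> = (b - a)^3/6" by (simp add: power2_eq_square power3_eq_cube field_simps)
  finally show ?thesis .
qed

end

context enc
begin

lemma contrib_pos:
  assumes "0 < cell_prob f i"
  shows "contrib i = (LINT t:{0..1}|lborel. GG (cell f i) t * (cell_prob f i - GG (cell f i) t)) / cell_prob f i"
proof -
  interpret cellA "cell f i" by (rule cellA)
  define p where "p = cell_prob f i"
  have pp: "0 < p" using assms unfolding p_def .
  have cm: "cond_mean f i t = t - GG (cell f i) t / measure lborel (cell f i)" for t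
    unfolding cm_eq using pp unfolding p_def cp_eq by (simp add: field_simps)
  have "contrib i = (LINT u:cell f i|lborel. LINT t:{0..1}|lborel. (saw u t - (t - GG (cell f i) t / measure lborel (cell f i)))^2)"
    unfolding contrib_eq Hi_def cm ..
  also have "\<dots> = (LINT t:{0..1}|lborel. GG (cell f i) t * (p - GG (cell f i) t)) / p"
    using cell_fubini pp unfolding p_def cp_eq by simp
  finally show ?thesis unfolding p_def .
qed

end

lemma fn_props:
  assumes n: "1 \<le> n"
  shows "distortion (fn n) = 1 / (6 * real n)"
    and "\<And>i. cell_prob (fn n) i = (if i < n then 1 / real n else 0)"
proof -
  interpret enc "fn n" by unfold_locales (rule fn_encoder)
  have np: "0 < real n" using n by simp
  have cpj: "cell_prob (fn n) j = 1 / real n" and cj: "contrib j = 1 / (6 * (real n)^2)" if j: "j < n" for j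
  proof -
    interpret cellA "cell (fn n) j" by (rule cellA)
    let ?a = "real j / real n" and ?b = "real (Suc j) / real n"
    have ab: "?a \<le> ?b" using np by (simp add: divide_right_mono)
    have ba: "?b - ?a = 1 / real n" using np by (simp add: field_simps)
    show cp: "cell_prob (fn n) j = 1 / real n"
      unfolding cp_eq GG_interval(1)[OF ab fn_cell[OF n j]] ba ..
    have b1: "?b \<le> 1" using j np by (simp add: field_simps)
    have I: "(LINT t:{0..1}|lborel. GG (cell (fn n) j) t * (measure lborel (cell (fn n) j) - GG (cell (fn n) j) t)) = (?b - ?a)^3/6"
      by (rule GG_int_interval[OF ab fn_cell[OF n j] _ b1]) simp
    have "contrib j = (LINT t:{0..1}|lborel. GG (cell (fn n) j) t * (measure lborel (cell (fn n) j) - GG (cell (fn n) j) t)) / measure lborel (cell (fn n) j)"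
      using contrib_pos[of j] cp np unfolding cp_eq by simp
    hence "contrib j = ((?b - ?a)^3/6) / cell_prob (fn n) j" unfolding I cp_eq .
    thus "contrib j = 1 / (6 * (real n)^2)" unfolding ba cp using np
      by (simp add: power2_eq_square power3_eq_cube field_simps)
  qed
  have "distortion (fn n) = (\<Sum>i<n. contrib i)"
    by (rule sum_eq[symmetric]) (rule fn_less[OF n])
  also have "\<dots> = (\<Sum>i<n. 1 / (6 * (real n)^2))" using cj by simp
  also have "\<dots> = 1 / (6 * real n)" using np by (simp add: power2_eq_square field_simps)
  finally show "distortion (fn n) = 1 / (6 * real n)" .
  fix i show "cell_prob (fn n) i = (if i < n then 1 / real n else 0)"
  proof (cases "i < n")
    case False
    have "cell (fn n) i = {}" using fn_less[OF n] False by (auto simp: cell_def)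
    thus ?thesis using False unfolding cp_eq by simp
  qed (use cpj in simp)
qed

lemma fn_entropy:
  assumes n: "1 \<le> n"
  shows "entropy (fn n) = ereal (log 2 (real n))"
proof -
  have np: "0 < real n" using n by simp
  have "entropy (fn n) = (\<Sum>i. ereal (if i < n then log 2 (real n) / real n else 0))"
    unfolding entropy_def fn_props(2)[OF n] using np
    by (intro suminf_cong) (simp add: log_divide)
  also have "\<dots> = (\<Sum>i<n. ereal (if i < n then log 2 (real n) / real n else 0))"
    by (rule suminf_finite) auto
  also have "\<dots> = (\<Sum>i<n. ereal (log 2 (real n) / real n))" by simp
  also have "\<dots> = ereal (log 2 (real n))" using np by (simp add: sum_ereal)
  finally show ?thesis .
qed



lemma ED_bounds:
  assumes Dp: "0 < \<Delta>"
  shows "ereal (log 2 (1 / (6 * \<Delta>))) \<le> entropy_distortion \<Delta>"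
    and "entropy_distortion \<Delta> \<le> ereal (log 2 (1 / (6 * \<Delta>) + 1))"
proof -
  show "ereal (log 2 (1 / (6 * \<Delta>))) \<le> entropy_distortion \<Delta>"
    unfolding entropy_distortion_def
  proof (rule INF_greatest)
    fix f assume "f \<in> {f. encoder f \<and> distortion f \<le> \<Delta>}"
    hence "encoder f" "distortion f \<le> \<Delta>" by auto
    then interpret enc f by unfold_locales
    show "ereal (log 2 (1 / (6 * \<Delta>))) \<le> entropy f" by (rule lower_bound) fact+
  qed
  define n where "n = nat \<lceil>1 / (6 * \<Delta>)\<rceil>"
  have x0: "0 < 1 / (6 * \<Delta>)" using Dp by simp
  have nge: "1 / (6 * \<Delta>) \<le> real n" unfolding n_def by linarith
  have nlt: "real n < 1 / (6 * \<Delta>) + 1" unfolding n_def using x0 by linarith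
  have n1: "1 \<le> n" using nge x0 by linarith
  have np: "0 < real n" using n1 by simp
  have "distortion (fn n) \<le> \<Delta>"
  proof -
    have "1 \<le> 6 * \<Delta> * real n" using nge Dp by (simp add: field_simps)
    thus ?thesis unfolding fn_props(1)[OF n1] using np Dp by (simp add: field_simps)
  qed
  hence "entropy_distortion \<Delta> \<le> entropy (fn n)"
    unfolding entropy_distortion_def using fn_encoder by (intro INF_lower) auto
  also have "\<dots> = ereal (log 2 (real n))" by (rule fn_entropy[OF n1])
  also have "\<dots> \<le> ereal (log 2 (1 / (6 * \<Delta>) + 1))"
    using nlt np by simp
  finally show "entropy_distortion \<Delta> \<le> ereal (log 2 (1 / (6 * \<Delta>) + 1))" .
qed

theorem corollary2:
  shows "((\<lambda>\<Delta>. \<bar>entropy_distortion \<Delta> - ereal (log 2 (1 / (6 * \<Delta>)))\<bar>) \<longlongrightarrow> 0)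
           (at_right (0::real))"
proof (rule tendsto_sandwich[where f="\<lambda>_. 0" and h="\<lambda>\<Delta>. ereal (log 2 (1 + 6 * \<Delta>))"])
  show "\<forall>\<^sub>F \<Delta> in at_right 0. 0 \<le> \<bar>entropy_distortion \<Delta> - ereal (log 2 (1 / (6 * \<Delta>)))\<bar>"
    by simp
  show "\<forall>\<^sub>F \<Delta> in at_right (0::real). \<bar>entropy_distortion \<Delta> - ereal (log 2 (1 / (6 * \<Delta>)))\<bar> \<le> ereal (log 2 (1 + 6 * \<Delta>))"
  proof (rule eventually_at_rightI[where b=1])
    fix \<Delta> :: real assume "\<Delta> \<in> {0<..<1}"
    hence Dp: "0 < \<Delta>" by simp
    note b = ED_bounds[OF Dp]
    obtain h where h: "entropy_distortion \<Delta> = ereal h"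
      using b by (cases "entropy_distortion \<Delta>") auto
    have hl: "log 2 (1 / (6 * \<Delta>)) \<le> h" "h \<le> log 2 (1 / (6 * \<Delta>) + 1)" using b h by auto
    have "log 2 (1 / (6 * \<Delta>) + 1) - log 2 (1 / (6 * \<Delta>)) = log 2 ((1 / (6 * \<Delta>) + 1) / (1 / (6 * \<Delta>)))"
      by (rule log_divide_pos[symmetric]) (use Dp in \<open>auto intro: add_pos_pos\<close>)
    also have "(1 / (6 * \<Delta>) + 1) / (1 / (6 * \<Delta>)) = 1 + 6 * \<Delta>" using Dp by (simp add: field_simps)
    finally have "h - log 2 (1 / (6 * \<Delta>)) \<le> log 2 (1 + 6 * \<Delta>)" using hl by linarith
    thus "\<bar>entropy_distortion \<Delta> - ereal (log 2 (1 / (6 * \<Delta>)))\<bar> \<le> ereal (log 2 (1 + 6 * \<Delta>))"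
      using hl unfolding h by simp
  qed simp
  show "((\<lambda>_. 0::ereal) \<longlongrightarrow> 0) (at_right 0)" by simp
  have "((\<lambda>\<Delta>::real. log 2 (1 + 6 * \<Delta>)) \<longlongrightarrow> log 2 (1 + 6 * 0)) (at_right 0)"
    by (intro tendsto_intros) auto
  hence "((\<lambda>\<Delta>::real. ereal (log 2 (1 + 6 * \<Delta>))) \<longlongrightarrow> ereal (log 2 (1 + 6 * 0))) (at_right 0)"
    by (rule tendsto_ereal)
  thus "((\<lambda>\<Delta>::real. ereal (log 2 (1 + 6 * \<Delta>))) \<longlongrightarrow> 0) (at_right 0)" by (simp add: zero_ereal_def)
qed


end
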